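(* If $(A,\Delta)$ is a generalized multiplier Hopf coquasigroup with an identity, then $(A,\Delta)$ is a Hopf coquasigroup.
   Context: A generalized multiplier Hopf coquasigroup is: an associative algebra $A$ over a field $k$ with non-degenerate product, an algebra homomorphism $\Delta:A\to M(A\otimes A)$ (not necessarily coassociative) with Galois maps $T_{1}(a\otimes b)=\Delta(a)(1\otimes b)$, $T_{2}(a\otimes b)=(a\otimes 1)\Delta(b)$ in $A\otimes A$, and a linear $\varepsilon:A\to k$ with $(\varepsilon\otimes\iota)T_{1}(a\otimes b)=ab=(\iota\otimes\varepsilon)T_{2}(a\otimes b)$, such that $T_{1},T_{2}$ are bijective, $T_{1}^{-1}=(\iota\otimes\varepsilon\otimes\iota)(\iota\otimes T_{1}^{-1})(\Delta\otimes\iota)$ and $T_{2}^{-1}=(\iota\otimes\varepsilon\otimes\iota)(T_{2}^{-1}\otimes\iota)(\iota\otimes\Delta)$. The antipode $S$ is defined by $S(a)b=(\varepsilon\otimes\iota)T_{1}^{-1}(a\otimes b)$. If $A$ has an identity then $M(A)=A$, $M(A\otimes A)=A\otimes A$. A Hopf coquasigroup (in the sense of Klim–Majid) is a unital algebra $A$ with algebra maps $\Delta:A\to A\otimes A$, $\varepsilon:A\to k$ (counital, $\Delta$ not necessarily coassociative) and a linear $S:A\to A$ with $(m\otimes\iota)(S\otimes\Delta)\Delta(a)=1\otimes a=(m\otimes\iota)(\iota\otimes S\otimes\iota)(\iota\otimes\Delta)\Delta(a)$ and $(\iota\otimes m)(\Delta\otimes S)\Delta(a)=a\otimes 1=(\iota\otimes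 m)(\iota\otimes S\otimes\iota)(\Delta\otimes\iota)\Delta(a)$. *)

theory Defs
  imports "HOL-Library.Poly_Mapping"
begin

text \<open>
  Vector spaces over a field 'k are modelled by their coordinates with respect to a
  (Hamel) basis: a k-vector space with basis indexed by the type 'b is the space
  'b \<Rightarrow>0 'k of finitely supported functions.  Every vector space is of this form
  up to isomorphism.  The tensor product of such spaces is then again free, with
  basis indexed by the product of the index types; this gives A \<otimes> A and
  A \<otimes> (A \<otimes> A), (A \<otimes> A) \<otimes> A canonically.
\<close>

type_synonym ('b, 'k) vec = "'b \<Rightarrow>\<^sub>0 'k"

definition vsc :: "'k::field \<Rightarrow> ('b, 'k) vec \<Rightarrow> ('b, 'k) vec" where
  "vsc c x = Poly_Mapping.map (\<lambda>a. c * a) x"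

definition bvec :: "'b \<Rightarrow> ('b, 'k::field) vec" where
  "bvec i = Poly_Mapping.single i 1"

definition lin_ext :: "('b \<Rightarrow> ('c, 'k::field) vec) \<Rightarrow> ('b, 'k) vec \<Rightarrow> ('c, 'k) vec" where
  "lin_ext F x = (\<Sum>p\<in>Poly_Mapping.keys x. vsc (Poly_Mapping.lookup x p) (F p))"

definition tens :: "('a, 'k::field) vec \<Rightarrow> ('c, 'k) vec \<Rightarrow> ('a \<times> 'c, 'k) vec" where
  "tens x y = (\<Sum>i\<in>Poly_Mapping.keys x. \<Sum>j\<in>Poly_Mapping.keys y. Poly_Mapping.single (i, j) (Poly_Mapping.lookup x i * Poly_Mapping.lookup y j))"

definition tmap :: "(('a, 'k::field) vec \<Rightarrow> ('c, 'k) vec) \<Rightarrow> (('d, 'k) vec \<Rightarrow> ('e, 'k) vec)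
    \<Rightarrow> ('a \<times> 'd, 'k) vec \<Rightarrow> ('c \<times> 'e, 'k) vec" where
  "tmap f g = lin_ext (\<lambda>(i, j). tens (f (bvec i)) (g (bvec j)))"

definition assoc_r :: "(('a \<times> 'b) \<times> 'c, 'k::field) vec \<Rightarrow> ('a \<times> ('b \<times> 'c), 'k) vec" where
  "assoc_r = lin_ext (\<lambda>((i, j), l). bvec (i, (j, l)))"

definition assoc_l :: "('a \<times> ('b \<times> 'c), 'k::field) vec \<Rightarrow> (('a \<times> 'b) \<times> 'c, 'k) vec" where
  "assoc_l = lin_ext (\<lambda>(i, (j, l)). bvec ((i, j), l))"

text \<open>(\<epsilon> \<otimes> \<iota>) : A \<otimes> C \<rightarrow> k \<otimes> C = C  and  (\<iota> \<otimes> \<epsilon>) : C \<otimes> A \<rightarrow> C \<otimes> k = C.\<close>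
definition eps_id :: "(('a, 'k::field) vec \<Rightarrow> 'k) \<Rightarrow> ('a \<times> 'c, 'k) vec \<Rightarrow> ('c, 'k) vec" where
  "eps_id \<epsilon> = lin_ext (\<lambda>(i, j). vsc (\<epsilon> (bvec i)) (bvec j))"

definition id_eps :: "(('a, 'k::field) vec \<Rightarrow> 'k) \<Rightarrow> ('c \<times> 'a, 'k) vec \<Rightarrow> ('c, 'k) vec" where
  "id_eps \<epsilon> = lin_ext (\<lambda>(i, j). vsc (\<epsilon> (bvec j)) (bvec i))"

definition mlin :: "(('b, 'k::field) vec \<Rightarrow> ('b, 'k) vec \<Rightarrow> ('b, 'k) vec)
    \<Rightarrow> ('b \<times> 'b, 'k) vec \<Rightarrow> ('b, 'k) vec" where
  "mlin mult = lin_ext (\<lambda>(i, j). mult (bvec i) (bvec j))"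

definition tmult :: "(('b, 'k::field) vec \<Rightarrow> ('b, 'k) vec \<Rightarrow> ('b, 'k) vec)
    \<Rightarrow> ('b \<times> 'b, 'k) vec \<Rightarrow> ('b \<times> 'b, 'k) vec \<Rightarrow> ('b \<times> 'b, 'k) vec" where
  "tmult mult x y = (\<Sum>p\<in>Poly_Mapping.keys x. \<Sum>q\<in>Poly_Mapping.keys y.
      vsc (Poly_Mapping.lookup x p * Poly_Mapping.lookup y q) (tens (mult (bvec (fst p)) (bvec (fst q))) (mult (bvec (snd p)) (bvec (snd q)))))"

definition linear_map :: "(('a, 'k::field) vec \<Rightarrow> ('c, 'k) vec) \<Rightarrow> bool" where
  "linear_map f \<longleftrightarrow> (\<forall>x y. f (x + y) = f x + f y) \<and> (\<forall>c x. f (vsc c x) = vsc c (f x))"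

definition linear_functional :: "(('a, 'k::field) vec \<Rightarrow> 'k) \<Rightarrow> bool" where
  "linear_functional f \<longleftrightarrow> (\<forall>x y. f (x + y) = f x + f y) \<and> (\<forall>c x. f (vsc c x) = c * f x)"

definition unital_algebra :: "(('b, 'k::field) vec \<Rightarrow> ('b, 'k) vec \<Rightarrow> ('b, 'k) vec) \<Rightarrow> ('b, 'k) vec \<Rightarrow> bool" where
  "unital_algebra mult one \<longleftrightarrow>
     (\<forall>a. linear_map (mult a)) \<and> (\<forall>b. linear_map (\<lambda>a. mult a b)) \<and>
     (\<forall>a b c. mult (mult a b) c = mult a (mult b c)) \<and>
     (\<forall>a. mult one a = a \<and> mult a one = a)"

definition galois_T1 where
  "galois_T1 mult one \<Delta> = lin_ext (\<lambda>(i, j). tmult mult (\<Delta> (bvec i)) (tens one (bvec j)))"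

definition galois_T2 where
  "galois_T2 mult one \<Delta> = lin_ext (\<lambda>(i, j). tmult mult (tens (bvec i) one) (\<Delta> (bvec j)))"

text \<open>Generalized multiplier Hopf coquasigroup, in the case where A has an identity
  (so M(A) = A and M(A \<otimes> A) = A \<otimes> A).\<close>
definition gen_mult_hopf_coquasigroup ::
  "(('b, 'k::field) vec \<Rightarrow> ('b, 'k) vec \<Rightarrow> ('b, 'k) vec) \<Rightarrow> ('b, 'k) vec
   \<Rightarrow> (('b, 'k) vec \<Rightarrow> ('b \<times> 'b, 'k) vec) \<Rightarrow> (('b, 'k) vec \<Rightarrow> 'k) \<Rightarrow> bool" where
  "gen_mult_hopf_coquasigroup mult one \<Delta> \<epsilon> \<longleftrightarrow>
     unital_algebra mult one \<and>
     linear_map \<Delta> \<and> (\<forall>a b. \<Delta> (mult a b) = tmult mult (\<Delta> a) (\<Delta> b)) \<and>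
     linear_functional \<epsilon> \<and>
     (\<forall>a b. eps_id \<epsilon> (galois_T1 mult one \<Delta> (tens a b)) = mult a b) \<and>
     (\<forall>a b. id_eps \<epsilon> (galois_T2 mult one \<Delta> (tens a b)) = mult a b) \<and>
     bij (galois_T1 mult one \<Delta>) \<and> bij (galois_T2 mult one \<Delta>) \<and>
     (\<forall>x. inv (galois_T1 mult one \<Delta>) x =
          tmap id (eps_id \<epsilon>) (tmap id (inv (galois_T1 mult one \<Delta>)) (assoc_r (tmap \<Delta> id x)))) \<and>
     (\<forall>x. inv (galois_T2 mult one \<Delta>) x =
          tmap (id_eps \<epsilon>) id (tmap (inv (galois_T2 mult one \<Delta>)) id (assoc_l (tmap id \<Delta> x))))"

definition is_antipode where
  "is_antipode mult one \<Delta> \<epsilon> S \<longleftrightarrow>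
     (\<forall>a b. mult (S a) b = eps_id \<epsilon> (inv (galois_T1 mult one \<Delta>) (tens a b)))"

definition hopf_coquasigroup ::
  "(('b, 'k::field) vec \<Rightarrow> ('b, 'k) vec \<Rightarrow> ('b, 'k) vec) \<Rightarrow> ('b, 'k) vec
   \<Rightarrow> (('b, 'k) vec \<Rightarrow> ('b \<times> 'b, 'k) vec) \<Rightarrow> (('b, 'k) vec \<Rightarrow> 'k)
   \<Rightarrow> (('b, 'k) vec \<Rightarrow> ('b, 'k) vec) \<Rightarrow> bool" where
  "hopf_coquasigroup mult one \<Delta> \<epsilon> S \<longleftrightarrow>
     unital_algebra mult one \<and>
     linear_map \<Delta> \<and> (\<forall>a b. \<Delta> (mult a b) = tmult mult (\<Delta> a) (\<Delta> b)) \<and> \<Delta> one = tens one one \<and>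
     linear_functional \<epsilon> \<and> (\<forall>a b. \<epsilon> (mult a b) = \<epsilon> a * \<epsilon> b) \<and> \<epsilon> one = 1 \<and>
     (\<forall>a. eps_id \<epsilon> (\<Delta> a) = a \<and> id_eps \<epsilon> (\<Delta> a) = a) \<and>
     linear_map S \<and>
     (\<forall>a. tmap (mlin mult) id (assoc_l (tmap S \<Delta> (\<Delta> a))) = tens one a) \<and>
     (\<forall>a. tmap (mlin mult) id (assoc_l (tmap id (tmap S id) (tmap id \<Delta> (\<Delta> a)))) = tens one a) \<and>
     (\<forall>a. tmap id (mlin mult) (assoc_r (tmap \<Delta> S (\<Delta> a))) = tens a one) \<and>
     (\<forall>a. tmap id (mlin mult) (assoc_r (tmap (tmap id S) id (tmap \<Delta> id (\<Delta> a)))) = tens a one)"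

end

theory Submission
  imports Defs
begin


abbreviation lk where "lk \<equiv> Poly_Mapping.lookup"
abbreviation ks where "ks \<equiv> Poly_Mapping.keys"


lemma lookup_vsc[simp]: "lk (vsc c x) p = c * lk x p"
  by (simp add: vsc_def Poly_Mapping.map.rep_eq when_def)

lemma lookup_bvec: "lk (bvec i) p = (if p = i then 1 else 0)"
  by (simp add: bvec_def lookup_single when_def)

lemma vsc_add: "vsc c (x + y) = vsc c x + vsc c y"
  by (rule poly_mapping_eqI) (simp add: lookup_add algebra_simps)

lemma vsc_add2: "vsc (c + d) x = vsc c x + vsc d x"
  by (rule poly_mapping_eqI) (simp add: lookup_add algebra_simps)

lemma vsc_vsc: "vsc c (vsc d x) = vsc (c * d) x"
  by (rule poly_mapping_eqI) simp

lemma vsc_zero[simp]: "vsc 0 x = 0" "vsc c 0 = 0"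
  by (rule poly_mapping_eqI, simp)+

lemma vsc_one[simp]: "vsc 1 x = x"
  by (rule poly_mapping_eqI) simp

lemma vsc_sum: "vsc c (sum f A) = (\<Sum>a\<in>A. vsc c (f a))"
  by (rule poly_mapping_eqI) (simp add: lookup_sum sum_distrib_left)

lemma vsc_sum2: "vsc (sum f A) x = (\<Sum>a\<in>A. vsc (f a) x)"
  by (rule poly_mapping_eqI) (simp add: lookup_sum sum_distrib_right)

lemma keys_vsc: "ks (vsc c x) \<subseteq> ks x"
  by (auto simp: in_keys_iff)

lemma lin_ext_superset:
  assumes "finite K" "ks x \<subseteq> K"
  shows "lin_ext F x = (\<Sum>p\<in>K. vsc (lk x p) (F p))"
  unfolding lin_ext_def
  by (rule sum.mono_neutral_left) (use assms in \<open>auto simp: in_keys_iff\<close>)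

lemma lin_ext_add: "lin_ext F (x + y) = lin_ext F x + lin_ext F y"
proof -
  let ?K = "ks x \<union> ks y \<union> ks (x + y)"
  have "lin_ext F (x + y) = (\<Sum>p\<in>?K. vsc (lk (x+y) p) (F p))"
    by (rule lin_ext_superset) auto
  also have "\<dots> = (\<Sum>p\<in>?K. vsc (lk x p) (F p)) + (\<Sum>p\<in>?K. vsc (lk y p) (F p))"
    by (simp add: lookup_add vsc_add2 sum.distrib)
  also have "\<dots> = lin_ext F x + lin_ext F y"
    by (subst (1 2) lin_ext_superset[of ?K]) auto
  finally show ?thesis .
qed

lemma lin_ext_vsc: "lin_ext F (vsc c x) = vsc c (lin_ext F x)"
proof -
  have "lin_ext F (vsc c x) = (\<Sum>p\<in>ks x. vsc (lk (vsc c x) p) (F p))"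
    by (rule lin_ext_superset) (auto simp: in_keys_iff)
  also have "\<dots> = vsc c (lin_ext F x)"
    by (simp add: lin_ext_def vsc_sum vsc_vsc)
  finally show ?thesis .
qed

lemma linear_lin_ext[simp]: "linear_map (lin_ext F)"
  by (simp add: linear_map_def lin_ext_add lin_ext_vsc)

lemma lin_ext_bvec: "lin_ext F (bvec i) = F i"
proof -
  have "lin_ext F (bvec i) = (\<Sum>p\<in>{i}. vsc (lk (bvec i) p) (F p))"
    by (rule lin_ext_superset) (auto simp: in_keys_iff lookup_bvec split: if_splits)
  then show ?thesis by (simp add: lookup_bvec)
qed

lemma lin_ext_bvec_id: "lin_ext bvec x = x"
proof (rule poly_mapping_eqI)
  fix q
  have "lk (lin_ext bvec x) q = (\<Sum>p\<in>ks x. lk x p * (if q = p then 1 else 0))"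
    by (simp add: lin_ext_def lookup_sum lookup_bvec)
  also have "\<dots> = lk x q"
    by (simp add: if_distrib sum.delta' in_keys_iff cong: if_cong)
  finally show "lk (lin_ext bvec x) q = lk x q" .
qed

lemma linear_zero: "linear_map f \<Longrightarrow> f 0 = 0"
  unfolding linear_map_def by (metis vsc_zero(1))

lemma linear_sum: "linear_map f \<Longrightarrow> f (sum g A) = (\<Sum>a\<in>A. f (g a))"
  by (induction A rule: infinite_finite_induct) (auto simp: linear_zero linear_map_def)

lemma lin_ext_comp: "linear_map H \<Longrightarrow> lin_ext (\<lambda>j. H (G j)) y = H (lin_ext G y)"
  by (simp add: lin_ext_def linear_sum) (simp add: linear_map_def)

lemma lin_ext_self: "linear_map g \<Longrightarrow> lin_ext (\<lambda>j. g (bvec j)) y = g y"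
  using lin_ext_comp[of g bvec y] by (simp add: lin_ext_bvec_id)

lemma linear_ext:
  assumes "linear_map f" "linear_map g" "\<And>i. f (bvec i) = g (bvec i)"
  shows "f = g"
proof
  fix x
  show "f x = g x"
    using lin_ext_self[OF assms(1), of x] lin_ext_self[OF assms(2), of x] assms(3) by simp
qed

lemma linear_comp: "linear_map f \<Longrightarrow> linear_map g \<Longrightarrow> linear_map (\<lambda>x. f (g x))"
  by (simp add: linear_map_def)

lemma linear_id[simp]: "linear_map id" "linear_map (\<lambda>x. x)"
  by (simp_all add: linear_map_def)

lemma linear_vsc[simp]: "linear_map (vsc c)"
  by (simp add: linear_map_def vsc_add vsc_vsc mult.commute)

lemma linear_add: "linear_map f \<Longrightarrow> linear_map g \<Longrightarrow> linear_map (\<lambda>x. f x + g x)"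
  by (simp add: linear_map_def vsc_add)

lemma functional_comp: "linear_functional e \<Longrightarrow> linear_map g \<Longrightarrow> linear_functional (\<lambda>x. e (g x))"
  by (simp add: linear_map_def linear_functional_def)

lemma functional_lin_ext:
  assumes "linear_functional e"
  shows "lin_ext (\<lambda>j. vsc (e (bvec j)) v) y = vsc (e y) v"
proof -
  have lm: "linear_map (\<lambda>x. vsc (e x) v)"
    using assms by (simp add: linear_functional_def linear_map_def vsc_add2 vsc_vsc)
  show ?thesis using lin_ext_self[OF lm] .
qed

lemma inv_linear:
  assumes "linear_map f" "bij f"
  shows "linear_map (inv f)"
proof -
  have fi: "f (inv f x) = x" for x using assms(2) by (simp add: bij_is_surj surj_f_inv_f)
  have inj: "inj f" using assms(2) bij_is_inj by blast
  show ?thesis unfolding linear_map_def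
  proof (intro conjI allI)
    fix x y
    have "f (inv f x + inv f y) = f (inv f (x + y))" using assms(1) by (simp add: linear_map_def fi)
    then show "inv f (x + y) = inv f x + inv f y" using inj by (metis injD)
  next
    fix c x
    have "f (vsc c (inv f x)) = f (inv f (vsc c x))" using assms(1) by (simp add: linear_map_def fi)
    then show "inv f (vsc c x) = vsc c (inv f x)" using inj by (metis injD)
  qed
qed

lemma linear_lin_ext_param:
  assumes "\<And>p. linear_map (G p)"
  shows "linear_map (\<lambda>y. lin_ext (\<lambda>p. G p y) x)"
  using assms unfolding lin_ext_def linear_map_def
  by (simp add: vsc_add sum.distrib vsc_sum vsc_vsc mult.commute)



lemma lookup_tens: "lk (tens x y) (i, j) = lk x i * lk y j"
proof -
  have "lk (tens x y) (i, j) = (\<Sum>i'\<in>ks x. \<Sum>j'\<in>ks y. if i' = i \<and> j' = j then lk x i' * lk y j' else 0)"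
    by (simp add: tens_def lookup_sum lookup_single when_def)
  also have "\<dots> = (\<Sum>i'\<in>ks x. if i' = i then (\<Sum>j'\<in>ks y. if j' = j then lk x i' * lk y j' else 0) else 0)"
    by (rule sum.cong) auto
  also have "\<dots> = lk x i * lk y j"
    by (simp add: sum.delta' in_keys_iff)
  finally show ?thesis .
qed

lemma lookup_tens': "lk (tens x y) p = lk x (fst p) * lk y (snd p)"
  using lookup_tens[of x y "fst p" "snd p"] by simp

lemma keys_tens: "ks (tens x y) \<subseteq> ks x \<times> ks y"
  by (auto simp: in_keys_iff lookup_tens')

lemma lin_ext_tens: "lin_ext F (tens a b) = lin_ext (\<lambda>i. lin_ext (\<lambda>j. F (i, j)) b) a"
proof -
  have "lin_ext F (tens a b) = (\<Sum>p\<in>ks a \<times> ks b. vsc (lk (tens a b) p) (F p))"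
    by (rule lin_ext_superset) (auto simp: keys_tens)
  also have "\<dots> = (\<Sum>i\<in>ks a. \<Sum>j\<in>ks b. vsc (lk a i * lk b j) (F (i, j)))"
    by (simp add: sum.cartesian_product lookup_tens' case_prod_beta)
  also have "\<dots> = lin_ext (\<lambda>i. lin_ext (\<lambda>j. F (i, j)) b) a"
    by (simp add: lin_ext_def vsc_sum vsc_vsc)
  finally show ?thesis .
qed

lemma bvec_pair: "bvec (i, j) = tens (bvec i) (bvec j)"
  by (rule poly_mapping_eqI) (auto simp: lookup_tens' lookup_bvec)

lemma tens_add1: "tens (x + y) z = tens x z + tens y z"
  by (rule poly_mapping_eqI) (simp add: lookup_tens' lookup_add algebra_simps)
lemma tens_add2: "tens z (x + y) = tens z x + tens z y"
  by (rule poly_mapping_eqI) (simp add: lookup_tens' lookup_add algebra_simps)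
lemma tens_vsc1: "tens (vsc c x) z = vsc c (tens x z)"
  by (rule poly_mapping_eqI) (simp add: lookup_tens' algebra_simps)
lemma tens_vsc2: "tens z (vsc c x) = vsc c (tens z x)"
  by (rule poly_mapping_eqI) (simp add: lookup_tens' algebra_simps)

lemma linear_tens1[simp]: "linear_map (\<lambda>x. tens x z)"
  by (simp add: linear_map_def tens_add1 tens_vsc1)
lemma linear_tens2[simp]: "linear_map (tens z)"
  by (simp add: linear_map_def tens_add2 tens_vsc2)

lemma tens_ext:
  assumes "linear_map f" "linear_map g" "\<And>x y. f (tens x y) = g (tens x y)"
  shows "f = g"
  by (rule linear_ext[OF assms(1,2)]) (auto simp: bvec_pair assms(3))

lemma tmap_tens:
  assumes "linear_map f" "linear_map g"
  shows "tmap f g (tens x y) = tens (f x) (g y)"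
proof -
  have "tmap f g (tens x y) = lin_ext (\<lambda>i. lin_ext (\<lambda>j. tens (f (bvec i)) (g (bvec j))) y) x"
    by (simp add: tmap_def lin_ext_tens)
  also have "\<dots> = lin_ext (\<lambda>i. tens (f (bvec i)) (g y)) x"
    by (simp add: lin_ext_comp[OF linear_tens2] lin_ext_self[OF assms(2)])
  also have "\<dots> = tens (f x) (g y)"
    using lin_ext_comp[OF linear_tens1[of "g y"], of "\<lambda>i. f (bvec i)" x] lin_ext_self[OF assms(1)] by simp
  finally show ?thesis .
qed

lemma linear_tmap[simp]: "linear_map (tmap f g)"
  by (simp add: tmap_def)

lemma assoc_r_tens: "assoc_r (tens (tens x y) z) = tens x (tens y z)"
proof -
  have "assoc_r (tens (tens x y) z) = lin_ext (\<lambda>i. lin_ext (\<lambda>j. lin_ext (\<lambda>l. tens (bvec i) (tens (bvec j) (bvec l))) z) y) x"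
    by (simp add: assoc_r_def lin_ext_tens bvec_pair)
  also have "\<dots> = tens x (tens y z)"
    by (simp add: lin_ext_comp[OF linear_tens2] lin_ext_comp[OF linear_tens1] lin_ext_bvec_id
        lin_ext_comp[OF linear_comp[OF linear_tens1 linear_tens2]])
  finally show ?thesis .
qed

lemma assoc_l_tens: "assoc_l (tens x (tens y z)) = tens (tens x y) z"
proof -
  have "assoc_l (tens x (tens y z)) = lin_ext (\<lambda>i. lin_ext (\<lambda>j. lin_ext (\<lambda>l. tens (tens (bvec i) (bvec j)) (bvec l)) z) y) x"
    by (simp add: assoc_l_def lin_ext_tens bvec_pair)
  also have "\<dots> = tens (tens x y) z"
    by (simp add: lin_ext_comp[OF linear_tens2] lin_ext_comp[OF linear_tens1] lin_ext_bvec_id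
        lin_ext_comp[OF linear_comp[OF linear_tens1 linear_tens1]])
  finally show ?thesis .
qed

lemma linear_assoc[simp]: "linear_map assoc_r" "linear_map assoc_l"
  by (simp_all add: assoc_r_def assoc_l_def)

lemma eps_id_tens:
  assumes "linear_functional e"
  shows "eps_id e (tens x y) = vsc (e x) y"
proof -
  have "eps_id e (tens x y) = lin_ext (\<lambda>i. lin_ext (\<lambda>j. vsc (e (bvec i)) (bvec j)) y) x"
    by (simp add: eps_id_def lin_ext_tens)
  also have "\<dots> = lin_ext (\<lambda>i. vsc (e (bvec i)) y) x"
    by (simp add: lin_ext_comp[OF linear_vsc] lin_ext_bvec_id)
  also have "\<dots> = vsc (e x) y" by (rule functional_lin_ext[OF assms])
  finally show ?thesis .
qed

lemma id_eps_tens: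
  assumes "linear_functional e"
  shows "id_eps e (tens x y) = vsc (e y) x"
proof -
  have "id_eps e (tens x y) = lin_ext (\<lambda>i. lin_ext (\<lambda>j. vsc (e (bvec j)) (bvec i)) y) x"
    by (simp add: id_eps_def lin_ext_tens)
  also have "\<dots> = lin_ext (\<lambda>i. vsc (e y) (bvec i)) x"
    by (simp add: functional_lin_ext[OF assms])
  also have "\<dots> = vsc (e y) x" by (simp add: lin_ext_comp[OF linear_vsc] lin_ext_bvec_id)
  finally show ?thesis .
qed

lemma linear_eps[simp]: "linear_map (eps_id e)" "linear_map (id_eps e)"
  by (simp_all add: eps_id_def id_eps_def)


lemma lin_ext_tensL: "linear_map f \<Longrightarrow> lin_ext (\<lambda>j. tens (f (bvec j)) Z) y = tens (f y) Z"
  using lin_ext_self[OF linear_comp[OF linear_tens1[of Z], of f]] by simp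

lemma lin_ext_tensR: "linear_map g \<Longrightarrow> lin_ext (\<lambda>j. tens Z (g (bvec j))) y = tens Z (g y)"
  using lin_ext_self[OF linear_comp[OF linear_tens2[of Z], of g]] by simp



locale gm =
  fixes mult :: "('b, 'k::field) vec \<Rightarrow> ('b, 'k) vec \<Rightarrow> ('b, 'k) vec"
    and one :: "('b, 'k) vec"
    and \<Delta> :: "('b, 'k) vec \<Rightarrow> ('b \<times> 'b, 'k) vec"
    and \<epsilon> :: "('b, 'k) vec \<Rightarrow> 'k"
    and S :: "('b, 'k) vec \<Rightarrow> ('b, 'k) vec"
  assumes gen: "gen_mult_hopf_coquasigroup mult one \<Delta> \<epsilon>"
    and ant: "is_antipode mult one \<Delta> \<epsilon> S"
begin

abbreviation "T1 \<equiv> galois_T1 mult one \<Delta>"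
abbreviation "T2 \<equiv> galois_T2 mult one \<Delta>"
abbreviation "tm \<equiv> tmult mult"

lemma alg: "unital_algebra mult one" using gen by (simp add: gen_mult_hopf_coquasigroup_def)
lemma lin_mult1[simp]: "linear_map (mult a)" using alg by (simp add: unital_algebra_def)
lemma lin_mult2[simp]: "linear_map (\<lambda>a. mult a b)" using alg by (simp add: unital_algebra_def)
lemma massoc: "mult (mult a b) c = mult a (mult b c)" using alg by (simp add: unital_algebra_def)
lemma one_l[simp]: "mult one a = a" using alg by (simp add: unital_algebra_def)
lemma one_r[simp]: "mult a one = a" using alg by (simp add: unital_algebra_def)
lemma lin_D[simp]: "linear_map \<Delta>" using gen by (simp add: gen_mult_hopf_coquasigroup_def)
lemma D_mult: "\<Delta> (mult a b) = tm (\<Delta> a) (\<Delta> b)" using gen by (simp add: gen_mult_hopf_coquasigroup_def)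
lemma lin_e: "linear_functional \<epsilon>" using gen by (simp add: gen_mult_hopf_coquasigroup_def)
lemma cou1: "eps_id \<epsilon> (T1 (tens a b)) = mult a b" using gen by (simp add: gen_mult_hopf_coquasigroup_def)
lemma cou2: "id_eps \<epsilon> (T2 (tens a b)) = mult a b" using gen by (simp add: gen_mult_hopf_coquasigroup_def)
lemma bij1: "bij T1" using gen by (simp add: gen_mult_hopf_coquasigroup_def)
lemma bij2: "bij T2" using gen by (simp add: gen_mult_hopf_coquasigroup_def)
lemma inv1: "inv T1 x = tmap id (eps_id \<epsilon>) (tmap id (inv T1) (assoc_r (tmap \<Delta> id x)))"
  using gen by (simp add: gen_mult_hopf_coquasigroup_def)
lemma inv2: "inv T2 x = tmap (id_eps \<epsilon>) id (tmap (inv T2) id (assoc_l (tmap id \<Delta> x)))"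
  using gen by (simp add: gen_mult_hopf_coquasigroup_def)
lemma antS: "mult (S a) b = eps_id \<epsilon> (inv T1 (tens a b))"
  using ant by (simp add: is_antipode_def)

lemma mlin_tens: "mlin mult (tens x y) = mult x y"
proof -
  have "mlin mult (tens x y) = lin_ext (\<lambda>i. lin_ext (\<lambda>j. mult (bvec i) (bvec j)) y) x"
    by (simp add: mlin_def lin_ext_tens)
  also have "\<dots> = lin_ext (\<lambda>i. mult (bvec i) y) x"
    by (simp add: lin_ext_self[OF lin_mult1])
  also have "\<dots> = mult x y"
    using lin_ext_self[OF lin_mult2[of y]] by simp
  finally show ?thesis .
qed

lemma linear_mlin[simp]: "linear_map (mlin mult)" by (simp add: mlin_def)

definition "BB p q = tens (mult (bvec (fst p)) (bvec (fst q))) (mult (bvec (snd p)) (bvec (snd q)))"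

lemma tmult_alt: "tm x y = lin_ext (\<lambda>p. lin_ext (\<lambda>q. BB p q) y) x"
  by (simp add: tmult_def lin_ext_def vsc_sum vsc_vsc BB_def)

lemma linear_tm1[simp]: "linear_map (\<lambda>x. tm x y)"
  by (simp add: tmult_alt)

lemma linear_tm2[simp]: "linear_map (tm x)"
  unfolding tmult_alt by (rule linear_lin_ext_param) simp

lemma tmult_tens: "tm (tens a b) (tens c d) = tens (mult a c) (mult b d)"
proof -
  have i: "lin_ext (\<lambda>q. BB p q) (tens c d) = tens (mult (bvec (fst p)) c) (mult (bvec (snd p)) d)" for p
  proof -
    have "lin_ext (\<lambda>q. BB p q) (tens c d) =
      lin_ext (\<lambda>k. lin_ext (\<lambda>l. tens (mult (bvec (fst p)) (bvec k)) (mult (bvec (snd p)) (bvec l))) d) c"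
      by (simp add: lin_ext_tens BB_def)
    also have "\<dots> = lin_ext (\<lambda>k. tens (mult (bvec (fst p)) (bvec k)) (mult (bvec (snd p)) d)) c"
      by (simp add: lin_ext_tensR[OF lin_mult1])
    also have "\<dots> = tens (mult (bvec (fst p)) c) (mult (bvec (snd p)) d)"
      by (simp add: lin_ext_tensL[OF lin_mult1])
    finally show ?thesis .
  qed
  have "tm (tens a b) (tens c d) = lin_ext (\<lambda>p. tens (mult (bvec (fst p)) c) (mult (bvec (snd p)) d)) (tens a b)"
    by (simp add: tmult_alt i)
  also have "\<dots> = lin_ext (\<lambda>i. lin_ext (\<lambda>j. tens (mult (bvec i) c) (mult (bvec j) d)) b) a"
    by (simp add: lin_ext_tens)
  also have "\<dots> = lin_ext (\<lambda>i. tens (mult (bvec i) c) (mult b d)) a"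
    by (simp add: lin_ext_tensR[OF lin_mult2[of d]])
  also have "\<dots> = tens (mult a c) (mult b d)"
    by (simp add: lin_ext_tensL[OF lin_mult2[of c]])
  finally show ?thesis .
qed

lemma tmult_assoc: "tm (tm x y) z = tm x (tm y z)"
proof -
  have "(\<lambda>x. tm (tm x y) z) = (\<lambda>x. tm x (tm y z))" for y z
  proof (rule tens_ext)
    show "linear_map (\<lambda>x. tm (tm x y) z)" by (rule linear_comp) simp_all
    show "linear_map (\<lambda>x. tm x (tm y z))" by simp
    fix a b
    have "(\<lambda>y. tm (tm (tens a b) y) z) = (\<lambda>y. tm (tens a b) (tm y z))" for z
    proof (rule tens_ext)
      show "linear_map (\<lambda>y. tm (tm (tens a b) y) z)" by (rule linear_comp) simp_all
      show "linear_map (\<lambda>y. tm (tens a b) (tm y z))" by (rule linear_comp) simp_all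
      fix c d
      show "tm (tm (tens a b) (tens c d)) z = tm (tens a b) (tm (tens c d) z)"
      proof (rule fun_cong[of _ _ z], rule tens_ext)
        show "linear_map (tm (tm (tens a b) (tens c d)))" by simp
        show "linear_map (\<lambda>z. tm (tens a b) (tm (tens c d) z))" by (rule linear_comp) simp_all
        fix e f
        show "tm (tm (tens a b) (tens c d)) (tens e f) = tm (tens a b) (tm (tens c d) (tens e f))"
          by (simp add: tmult_tens massoc)
      qed
    qed
    then show "tm (tm (tens a b) y) z = tm (tens a b) (tm y z)" by meson
  qed
  then show ?thesis by meson
qed

lemma tmult_one_r[simp]: "tm x (tens one one) = x"
proof -
  have "(\<lambda>x. tm x (tens one one)) = (\<lambda>x. x)"
    by (rule tens_ext) (simp_all add: tmult_tens)
  then show ?thesis by meson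
qed

lemma tmult_one_l[simp]: "tm (tens one one) x = x"
proof -
  have "tm (tens one one) = (\<lambda>x. x)"
    by (rule tens_ext) (simp_all add: tmult_tens)
  then show ?thesis by meson
qed

lemma T1_tens: "T1 (tens a b) = tm (\<Delta> a) (tens one b)"
proof -
  have "T1 (tens a b) = lin_ext (\<lambda>i. lin_ext (\<lambda>j. tm (\<Delta> (bvec i)) (tens one (bvec j))) b) a"
    by (simp add: galois_T1_def lin_ext_tens)
  also have "\<dots> = lin_ext (\<lambda>i. tm (\<Delta> (bvec i)) (tens one b)) a"
    by (simp add: lin_ext_self[OF linear_comp[OF linear_tm2 linear_tens2]])
  also have "\<dots> = tm (\<Delta> a) (tens one b)"
    using lin_ext_self[OF linear_comp[OF linear_tm1[of "tens one b"] lin_D]] by simp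
  finally show ?thesis .
qed

lemma T2_tens: "T2 (tens a b) = tm (tens a one) (\<Delta> b)"
proof -
  have "T2 (tens a b) = lin_ext (\<lambda>i. lin_ext (\<lambda>j. tm (tens (bvec i) one) (\<Delta> (bvec j))) b) a"
    by (simp add: galois_T2_def lin_ext_tens)
  also have "\<dots> = lin_ext (\<lambda>i. tm (tens (bvec i) one) (\<Delta> b)) a"
    by (simp add: lin_ext_self[OF linear_comp[OF linear_tm2 lin_D]])
  also have "\<dots> = tm (tens a one) (\<Delta> b)"
    using lin_ext_self[OF linear_comp[OF linear_tm1[of "\<Delta> b"] linear_tens1]] by simp
  finally show ?thesis .
qed

lemma linear_T[simp]: "linear_map T1" "linear_map T2"
  by (simp_all add: galois_T1_def galois_T2_def)

lemma linear_invT[simp]: "linear_map (inv T1)" "linear_map (inv T2)"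
  by (simp_all add: inv_linear bij1 bij2)

lemma T1_inv[simp]: "T1 (inv T1 x) = x" "inv T1 (T1 x) = x"
  using bij1 by (simp_all add: bij_is_surj surj_f_inv_f bij_is_inj)
lemma T2_inv[simp]: "T2 (inv T2 x) = x" "inv T2 (T2 x) = x"
  using bij2 by (simp_all add: bij_is_surj surj_f_inv_f bij_is_inj)

end


context gm begin

lemma mult_vsc1: "mult (vsc c x) y = vsc c (mult x y)"
  using lin_mult2[of y] unfolding linear_map_def by blast
lemma mult_vsc2: "mult x (vsc c y) = vsc c (mult x y)"
  using lin_mult1[of x] unfolding linear_map_def by blast

lemma D_one: "\<Delta> one = tens one one"
proof -
  have "(\<lambda>y. tm (\<Delta> one) (T1 y)) = T1"
  proof (rule tens_ext)
    show "linear_map (\<lambda>y. tm (\<Delta> one) (T1 y))" by (rule linear_comp) simp_all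
    show "linear_map T1" by simp
    fix a b
    show "tm (\<Delta> one) (T1 (tens a b)) = T1 (tens a b)"
      by (simp add: T1_tens tmult_assoc[symmetric] D_mult[symmetric])
  qed
  then have "tm (\<Delta> one) (T1 (inv T1 (tens one one))) = T1 (inv T1 (tens one one))" by (rule fun_cong)
  then show ?thesis by simp
qed

lemma T1_a1: "T1 (tens a one) = \<Delta> a" by (simp add: T1_tens)
lemma T2_1a: "T2 (tens one a) = \<Delta> a" by (simp add: T2_tens)

lemma counit1: "eps_id \<epsilon> (\<Delta> a) = a" using cou1[of a one] by (simp add: T1_a1)
lemma counit2: "id_eps \<epsilon> (\<Delta> a) = a" using cou2[of one a] by (simp add: T2_1a)

lemma bvec_nz: "bvec i \<noteq> (0 :: ('b,'k) vec)"
proof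
  assume "bvec i = (0 :: ('b,'k) vec)"
  then have "lk (bvec i :: ('b,'k) vec) i = 0" by simp
  then show False by (simp add: lookup_bvec)
qed

lemma one_nz: "one \<noteq> 0"
proof
  assume "one = 0"
  then have "mult one (bvec i) = 0" for i using linear_zero[OF lin_mult2] by simp
  then show False using bvec_nz by simp
qed

lemma vsc_cancel: "x \<noteq> 0 \<Longrightarrow> vsc c x = vsc d x \<Longrightarrow> c = d"
proof -
  assume "x \<noteq> 0" "vsc c x = vsc d x"
  then obtain p where p: "lk x p \<noteq> 0" by (metis poly_mapping_eqI lookup_zero)
  have "c * lk x p = d * lk x p" using \<open>vsc c x = vsc d x\<close> by (metis lookup_vsc)
  then show "c = d" using p by simp
qed

lemma eps_one: "\<epsilon> one = 1"
proof -
  have "vsc (\<epsilon> one) one = vsc 1 one"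
    using counit1[of one] by (simp add: D_one eps_id_tens[OF lin_e])
  then show ?thesis using vsc_cancel one_nz by blast
qed

lemma e_vsc: "\<epsilon> (vsc c x) = c * \<epsilon> x" using lin_e by (simp add: linear_functional_def)

lemma eps_mult: "\<epsilon> (mult a b) = \<epsilon> a * \<epsilon> b"
proof -
  have P: "(\<lambda>y. eps_id \<epsilon> (tm (\<Delta> a) (T1 y))) = (\<lambda>y. mult a (eps_id \<epsilon> (T1 y)))"
  proof (rule tens_ext)
    show "linear_map (\<lambda>y. eps_id \<epsilon> (tm (\<Delta> a) (T1 y)))"
      by (rule linear_comp, simp, rule linear_comp, simp_all)
    show "linear_map (\<lambda>y. mult a (eps_id \<epsilon> (T1 y)))"
      by (rule linear_comp, simp, rule linear_comp, simp_all)
    fix c d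
    show "eps_id \<epsilon> (tm (\<Delta> a) (T1 (tens c d))) = mult a (eps_id \<epsilon> (T1 (tens c d)))"
      by (simp add: T1_tens tmult_assoc[symmetric] D_mult[symmetric] cou1[unfolded T1_tens] massoc)
  qed
  have P2: "eps_id \<epsilon> (tm (\<Delta> a) x) = mult a (eps_id \<epsilon> x)" for x
    using fun_cong[OF P, of "inv T1 x"] by simp
  have E: "\<epsilon> (eps_id \<epsilon> w) = \<epsilon> (id_eps \<epsilon> w)" for w
  proof -
    have "(\<lambda>w. vsc (\<epsilon> (eps_id \<epsilon> w)) one) = (\<lambda>w. vsc (\<epsilon> (id_eps \<epsilon> w)) one)"
    proof (rule tens_ext)
      have l: "linear_map (\<lambda>x. vsc (\<epsilon> x) one)"
        using lin_e by (simp add: linear_functional_def linear_map_def vsc_add2 vsc_vsc)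
      show "linear_map (\<lambda>w. vsc (\<epsilon> (eps_id \<epsilon> w)) one)" by (rule linear_comp[OF l]) simp
      show "linear_map (\<lambda>w. vsc (\<epsilon> (id_eps \<epsilon> w)) one)" by (rule linear_comp[OF l]) simp
      fix x y show "vsc (\<epsilon> (eps_id \<epsilon> (tens x y))) one = vsc (\<epsilon> (id_eps \<epsilon> (tens x y))) one"
        by (simp add: eps_id_tens[OF lin_e] id_eps_tens[OF lin_e] e_vsc mult.commute)
    qed
    then show ?thesis using vsc_cancel[OF one_nz] by meson
  qed
  have I: "(\<lambda>w. id_eps \<epsilon> (tm w (tens b one))) = (\<lambda>w. mult (id_eps \<epsilon> w) b)"
  proof (rule tens_ext)
    show "linear_map (\<lambda>w. id_eps \<epsilon> (tm w (tens b one)))" by (rule linear_comp, simp, rule linear_comp, simp_all)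
    show "linear_map (\<lambda>w. mult (id_eps \<epsilon> w) b)" by (rule linear_comp, simp, rule linear_comp, simp_all)
    fix x y show "id_eps \<epsilon> (tm (tens x y) (tens b one)) = mult (id_eps \<epsilon> (tens x y)) b"
      by (simp add: tmult_tens id_eps_tens[OF lin_e] mult_vsc1)
  qed
  have "\<epsilon> (mult a b) = \<epsilon> (id_eps \<epsilon> (tm (\<Delta> a) (tens b one)))"
    using fun_cong[OF I, of "\<Delta> a"] by (simp add: counit2)
  also have "\<dots> = \<epsilon> (eps_id \<epsilon> (tm (\<Delta> a) (tens b one)))" by (simp add: E)
  also have "\<dots> = \<epsilon> a * \<epsilon> b"
    by (simp add: P2 eps_id_tens[OF lin_e] mult_vsc2 e_vsc mult.commute)
  finally show ?thesis .
qed

end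


context gm begin

lemma S_eq: "S = (\<lambda>a. eps_id \<epsilon> (inv T1 (tens a one)))"
proof
  fix a show "S a = eps_id \<epsilon> (inv T1 (tens a one))" using antS[of a one] by simp
qed

lemma lin_S[simp]: "linear_map S"
  unfolding S_eq by (rule linear_comp, simp, rule linear_comp, simp_all)

lemma lin_Sb[simp]: "linear_map (\<lambda>c. mult (S c) b)"
  by (rule linear_comp[OF lin_mult2 lin_S])

lemma F1: "inv T1 (tens a b) = tmap id (\<lambda>c. mult (S c) b) (\<Delta> a)"
proof -
  have "(\<lambda>u. tmap id (eps_id \<epsilon>) (tmap id (inv T1) (assoc_r (tens u b)))) = tmap id (\<lambda>c. mult (S c) b)"
  proof (rule tens_ext)
    show "linear_map (\<lambda>u. tmap id (eps_id \<epsilon>) (tmap id (inv T1) (assoc_r (tens u b))))"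
      by (rule linear_comp, simp, rule linear_comp, simp, rule linear_comp, simp_all)
    show "linear_map (tmap id (\<lambda>c. mult (S c) b))" by simp
    fix x y
    show "tmap id (eps_id \<epsilon>) (tmap id (inv T1) (assoc_r (tens (tens x y) b))) =
          tmap id (\<lambda>c. mult (S c) b) (tens x y)"
      by (simp add: assoc_r_tens tmap_tens) (simp add: antS)
  qed
  then have "tmap id (eps_id \<epsilon>) (tmap id (inv T1) (assoc_r (tens (\<Delta> a) b))) = tmap id (\<lambda>c. mult (S c) b) (\<Delta> a)"
    by (rule fun_cong)
  then show ?thesis
    by (subst inv1) (simp add: tmap_tens)
qed

lemma G: "tmap id (mlin mult) (assoc_r (tens w z)) = tm w (tens one z)"
proof -
  have "(\<lambda>w. tmap id (mlin mult) (assoc_r (tens w z))) = (\<lambda>w. tm w (tens one z))"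
  proof (rule tens_ext)
    show "linear_map (\<lambda>w. tmap id (mlin mult) (assoc_r (tens w z)))"
      by (rule linear_comp, simp, rule linear_comp, simp_all)
    show "linear_map (\<lambda>w. tm w (tens one z))" by simp
    fix x y show "tmap id (mlin mult) (assoc_r (tens (tens x y) z)) = tm (tens x y) (tens one z)"
      by (simp add: assoc_r_tens tmap_tens mlin_tens tmult_tens)
  qed
  then show ?thesis by (rule fun_cong)
qed

lemma G': "tmap (mlin mult) id (assoc_l (tens z w)) = tm (tens z one) w"
proof -
  have "(\<lambda>w. tmap (mlin mult) id (assoc_l (tens z w))) = tm (tens z one)"
  proof (rule tens_ext)
    show "linear_map (\<lambda>w. tmap (mlin mult) id (assoc_l (tens z w)))"
      by (rule linear_comp, simp, rule linear_comp, simp_all)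
    show "linear_map (tm (tens z one))" by simp
    fix x y show "tmap (mlin mult) id (assoc_l (tens z (tens x y))) = tm (tens z one) (tens x y)"
      by (simp add: assoc_l_tens tmap_tens mlin_tens tmult_tens)
  qed
  then show ?thesis by (rule fun_cong)
qed

lemma R1: "tmap id (mlin mult) (assoc_r (tmap \<Delta> S (\<Delta> a))) = tens a one"
proof -
  have "(\<lambda>u. T1 (tmap id S u)) = (\<lambda>u. tmap id (mlin mult) (assoc_r (tmap \<Delta> S u)))"
  proof (rule tens_ext)
    show "linear_map (\<lambda>u. T1 (tmap id S u))" by (rule linear_comp) simp_all
    show "linear_map (\<lambda>u. tmap id (mlin mult) (assoc_r (tmap \<Delta> S u)))"
      by (rule linear_comp, simp, rule linear_comp, simp_all)
    fix x y show "T1 (tmap id S (tens x y)) = tmap id (mlin mult) (assoc_r (tmap \<Delta> S (tens x y)))"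
      by (simp add: tmap_tens G T1_tens)
  qed
  then have "T1 (tmap id S (\<Delta> a)) = tmap id (mlin mult) (assoc_r (tmap \<Delta> S (\<Delta> a)))" by (rule fun_cong)
  moreover have "T1 (tmap id S (\<Delta> a)) = tens a one"
    using F1[of a one] by (metis (no_types) T1_inv(1) one_r ext)
  ultimately show ?thesis by simp
qed

lemma H: "tmap id (\<lambda>c. mult (S c) y) w = tm (tmap id S w) (tens one y)"
proof -
  have "tmap id (\<lambda>c. mult (S c) y) = (\<lambda>w. tm (tmap id S w) (tens one y))"
  proof (rule tens_ext)
    show "linear_map (tmap id (\<lambda>c. mult (S c) y))" by simp
    show "linear_map (\<lambda>w. tm (tmap id S w) (tens one y))" by (rule linear_comp) simp_all
    fix p q show "tmap id (\<lambda>c. mult (S c) y) (tens p q) = tm (tmap id S (tens p q)) (tens one y)"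
      by (simp add: tmap_tens tmult_tens)
  qed
  then show ?thesis by (rule fun_cong)
qed

lemma R2: "tmap id (mlin mult) (assoc_r (tmap (tmap id S) id (tmap \<Delta> id (\<Delta> a)))) = tens a one"
proof -
  have "inv T1 = (\<lambda>u. tmap id (mlin mult) (assoc_r (tmap (tmap id S) id (tmap \<Delta> id u))))"
  proof (rule tens_ext)
    show "linear_map (inv T1)" by simp
    show "linear_map (\<lambda>u. tmap id (mlin mult) (assoc_r (tmap (tmap id S) id (tmap \<Delta> id u))))"
      by (rule linear_comp, simp, rule linear_comp, simp, rule linear_comp, simp_all)
    fix x y show "inv T1 (tens x y) = tmap id (mlin mult) (assoc_r (tmap (tmap id S) id (tmap \<Delta> id (tens x y))))"
      by (simp add: F1 tmap_tens G H)
  qed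
  then have "inv T1 (\<Delta> a) = tmap id (mlin mult) (assoc_r (tmap (tmap id S) id (tmap \<Delta> id (\<Delta> a))))"
    by (rule fun_cong)
  moreover have "inv T1 (\<Delta> a) = tens a one" by (metis T1_a1 T1_inv(2))
  ultimately show ?thesis by simp
qed

end


context gm begin

definition "S2 c = id_eps \<epsilon> (inv T2 (tens one c))"

lemma lin_S2[simp]: "linear_map S2"
proof -
  have "S2 = (\<lambda>c. id_eps \<epsilon> (inv T2 (tens one c)))" by (rule ext) (simp add: S2_def)
  moreover have "linear_map (\<lambda>c. id_eps \<epsilon> (inv T2 (tens one c)))"
    by (rule linear_comp, simp, rule linear_comp, simp_all)
  ultimately show ?thesis by simp
qed

lemma T2L: "T2 (tm (tens x one) v) = tm (tens x one) (T2 v)"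
proof -
  have "(\<lambda>v. T2 (tm (tens x one) v)) = (\<lambda>v. tm (tens x one) (T2 v))"
  proof (rule tens_ext)
    show "linear_map (\<lambda>v. T2 (tm (tens x one) v))" by (rule linear_comp) simp_all
    show "linear_map (\<lambda>v. tm (tens x one) (T2 v))" by (rule linear_comp) simp_all
    fix p q show "T2 (tm (tens x one) (tens p q)) = tm (tens x one) (T2 (tens p q))"
      by (simp add: tmult_tens T2_tens tmult_assoc[symmetric])
  qed
  then show ?thesis by (rule fun_cong)
qed

lemma IE: "id_eps \<epsilon> (tm (tens x one) v) = mult x (id_eps \<epsilon> v)"
proof -
  have "(\<lambda>v. id_eps \<epsilon> (tm (tens x one) v)) = (\<lambda>v. mult x (id_eps \<epsilon> v))"
  proof (rule tens_ext)
    show "linear_map (\<lambda>v. id_eps \<epsilon> (tm (tens x one) v))" by (rule linear_comp) simp_all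
    show "linear_map (\<lambda>v. mult x (id_eps \<epsilon> v))" by (rule linear_comp) simp_all
    fix p q show "id_eps \<epsilon> (tm (tens x one) (tens p q)) = mult x (id_eps \<epsilon> (tens p q))"
      by (simp add: tmult_tens id_eps_tens[OF lin_e] mult_vsc2)
  qed
  then show ?thesis by (rule fun_cong)
qed

lemma Sx: "id_eps \<epsilon> (inv T2 (tens x c)) = mult x (S2 c)"
proof -
  have "inv T2 (tens x c) = inv T2 (tm (tens x one) (T2 (inv T2 (tens one c))))"
    by (simp add: tmult_tens)
  also have "\<dots> = tm (tens x one) (inv T2 (tens one c))"
    by (simp only: T2L[symmetric] T2_inv(2))
  finally show ?thesis by (simp add: IE S2_def)
qed

lemma lin_S2a[simp]: "linear_map (\<lambda>c. mult a (S2 c))"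
  by (rule linear_comp[OF lin_mult1 lin_S2])

lemma F2: "inv T2 (tens a b) = tmap (\<lambda>c. mult a (S2 c)) id (\<Delta> b)"
proof -
  have "(\<lambda>u. tmap (id_eps \<epsilon>) id (tmap (inv T2) id (assoc_l (tens a u)))) = tmap (\<lambda>c. mult a (S2 c)) id"
  proof (rule tens_ext)
    show "linear_map (\<lambda>u. tmap (id_eps \<epsilon>) id (tmap (inv T2) id (assoc_l (tens a u))))"
      by (rule linear_comp, simp, rule linear_comp, simp, rule linear_comp, simp_all)
    show "linear_map (tmap (\<lambda>c. mult a (S2 c)) id)" by simp
    fix x y
    show "tmap (id_eps \<epsilon>) id (tmap (inv T2) id (assoc_l (tens a (tens x y)))) =
          tmap (\<lambda>c. mult a (S2 c)) id (tens x y)"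
      by (simp add: assoc_l_tens tmap_tens) (simp add: Sx)
  qed
  then have "tmap (id_eps \<epsilon>) id (tmap (inv T2) id (assoc_l (tens a (\<Delta> b)))) = tmap (\<lambda>c. mult a (S2 c)) id (\<Delta> b)"
    by (rule fun_cong)
  then show ?thesis
    by (subst inv2) (simp add: tmap_tens)
qed

lemma L1': "tmap (mlin mult) id (assoc_l (tmap S2 \<Delta> (\<Delta> a))) = tens one a"
proof -
  have "(\<lambda>u. T2 (tmap S2 id u)) = (\<lambda>u. tmap (mlin mult) id (assoc_l (tmap S2 \<Delta> u)))"
  proof (rule tens_ext)
    show "linear_map (\<lambda>u. T2 (tmap S2 id u))" by (rule linear_comp) simp_all
    show "linear_map (\<lambda>u. tmap (mlin mult) id (assoc_l (tmap S2 \<Delta> u)))"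
      by (rule linear_comp, simp, rule linear_comp, simp_all)
    fix x y show "T2 (tmap S2 id (tens x y)) = tmap (mlin mult) id (assoc_l (tmap S2 \<Delta> (tens x y)))"
      by (simp add: tmap_tens G' T2_tens)
  qed
  then have "T2 (tmap S2 id (\<Delta> a)) = tmap (mlin mult) id (assoc_l (tmap S2 \<Delta> (\<Delta> a)))" by (rule fun_cong)
  moreover have "T2 (tmap S2 id (\<Delta> a)) = tens one a"
  proof -
    have "(\<lambda>c. mult one (S2 c)) = S2" by (rule ext) simp
    then show ?thesis using F2[of one a] by (metis T2_inv(1))
  qed
  ultimately show ?thesis by simp
qed

lemma H2: "tmap (\<lambda>c. mult x (S2 c)) id w = tm (tens x one) (tmap S2 id w)"
proof -
  have "tmap (\<lambda>c. mult x (S2 c)) id = (\<lambda>w. tm (tens x one) (tmap S2 id w))"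
  proof (rule tens_ext)
    show "linear_map (tmap (\<lambda>c. mult x (S2 c)) id)" by simp
    show "linear_map (\<lambda>w. tm (tens x one) (tmap S2 id w))" by (rule linear_comp) simp_all
    fix p q show "tmap (\<lambda>c. mult x (S2 c)) id (tens p q) = tm (tens x one) (tmap S2 id (tens p q))"
      by (simp add: tmap_tens tmult_tens)
  qed
  then show ?thesis by (rule fun_cong)
qed

lemma L2': "tmap (mlin mult) id (assoc_l (tmap id (tmap S2 id) (tmap id \<Delta> (\<Delta> a)))) = tens one a"
proof -
  have "inv T2 = (\<lambda>u. tmap (mlin mult) id (assoc_l (tmap id (tmap S2 id) (tmap id \<Delta> u))))"
  proof (rule tens_ext)
    show "linear_map (inv T2)" by simp
    show "linear_map (\<lambda>u. tmap (mlin mult) id (assoc_l (tmap id (tmap S2 id) (tmap id \<Delta> u))))"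
      by (rule linear_comp, simp, rule linear_comp, simp, rule linear_comp, simp_all)
    fix x y show "inv T2 (tens x y) = tmap (mlin mult) id (assoc_l (tmap id (tmap S2 id) (tmap id \<Delta> (tens x y))))"
      by (simp add: F2 tmap_tens G' H2)
  qed
  then have "inv T2 (\<Delta> a) = tmap (mlin mult) id (assoc_l (tmap id (tmap S2 id) (tmap id \<Delta> (\<Delta> a))))"
    by (rule fun_cong)
  moreover have "inv T2 (\<Delta> a) = tens one a" by (metis T2_1a T2_inv(2))
  ultimately show ?thesis by simp
qed

lemma Phi_eps: "mlin mult (tmap id S (\<Delta> a)) = vsc (\<epsilon> a) one"
proof -
  have "(\<lambda>u. eps_id \<epsilon> (tmap id (mlin mult) (assoc_r (tmap \<Delta> S u)))) = (\<lambda>u. mlin mult (tmap id S u))"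
  proof (rule tens_ext)
    show "linear_map (\<lambda>u. eps_id \<epsilon> (tmap id (mlin mult) (assoc_r (tmap \<Delta> S u))))"
      by (rule linear_comp, simp, rule linear_comp, simp, rule linear_comp, simp_all)
    show "linear_map (\<lambda>u. mlin mult (tmap id S u))" by (rule linear_comp) simp_all
    fix x y show "eps_id \<epsilon> (tmap id (mlin mult) (assoc_r (tmap \<Delta> S (tens x y)))) = mlin mult (tmap id S (tens x y))"
      by (simp add: tmap_tens G T1_tens[symmetric] cou1 mlin_tens)
  qed
  then have "eps_id \<epsilon> (tmap id (mlin mult) (assoc_r (tmap \<Delta> S (\<Delta> a)))) = mlin mult (tmap id S (\<Delta> a))"
    by (rule fun_cong)
  then show ?thesis by (simp add: R1 eps_id_tens[OF lin_e])
qed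

lemma PhiL: "mlin mult (tmap id S (tm (tens z one) w)) = mult z (mlin mult (tmap id S w))"
proof -
  have "(\<lambda>w. mlin mult (tmap id S (tm (tens z one) w))) = (\<lambda>w. mult z (mlin mult (tmap id S w)))"
  proof (rule tens_ext)
    show "linear_map (\<lambda>w. mlin mult (tmap id S (tm (tens z one) w)))"
      by (rule linear_comp, simp, rule linear_comp, simp_all)
    show "linear_map (\<lambda>w. mult z (mlin mult (tmap id S w)))"
      by (rule linear_comp, simp, rule linear_comp, simp_all)
    fix p q show "mlin mult (tmap id S (tm (tens z one) (tens p q))) = mult z (mlin mult (tmap id S (tens p q)))"
      by (simp add: tmult_tens tmap_tens mlin_tens massoc)
  qed
  then show ?thesis by (rule fun_cong)
qed

lemma S_S2: "S = S2"
proof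
  fix a
  have "(\<lambda>u. mlin mult (tmap id S (tmap (mlin mult) id (assoc_l (tmap S2 \<Delta> u))))) = (\<lambda>u. S2 (id_eps \<epsilon> u))"
  proof (rule tens_ext)
    show "linear_map (\<lambda>u. mlin mult (tmap id S (tmap (mlin mult) id (assoc_l (tmap S2 \<Delta> u)))))"
      by (rule linear_comp, simp, rule linear_comp, simp, rule linear_comp, simp, rule linear_comp, simp_all)
    show "linear_map (\<lambda>u. S2 (id_eps \<epsilon> u))" by (rule linear_comp) simp_all
    fix x y
    have "S2 (vsc c x) = vsc c (S2 x)" for c using lin_S2 unfolding linear_map_def by blast
    then show "mlin mult (tmap id S (tmap (mlin mult) id (assoc_l (tmap S2 \<Delta> (tens x y))))) = S2 (id_eps \<epsilon> (tens x y))"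
      by (simp add: tmap_tens G' PhiL Phi_eps mult_vsc2 id_eps_tens[OF lin_e])
  qed
  then have "mlin mult (tmap id S (tmap (mlin mult) id (assoc_l (tmap S2 \<Delta> (\<Delta> a))))) = S2 (id_eps \<epsilon> (\<Delta> a))"
    by (rule fun_cong)
  then show "S a = S2 a" by (simp add: L1' counit2 tmap_tens mlin_tens)
qed

lemma main: "hopf_coquasigroup mult one \<Delta> \<epsilon> S"
  unfolding hopf_coquasigroup_def
  using alg lin_D D_mult D_one lin_e eps_mult eps_one counit1 counit2 lin_S R1 R2 L1' L2'
  by (simp add: S_S2)

end


theorem theorem3p1:
  fixes mult :: "('b, 'k::field) vec \<Rightarrow> ('b, 'k) vec \<Rightarrow> ('b, 'k) vec"
    and one :: "('b, 'k) vec"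
    and \<Delta> :: "('b, 'k) vec \<Rightarrow> ('b \<times> 'b, 'k) vec"
    and \<epsilon> :: "('b, 'k) vec \<Rightarrow> 'k"
    and S :: "('b, 'k) vec \<Rightarrow> ('b, 'k) vec"
  assumes "gen_mult_hopf_coquasigroup mult one \<Delta> \<epsilon>"
    and "is_antipode mult one \<Delta> \<epsilon> S"
  shows "hopf_coquasigroup mult one \<Delta> \<epsilon> S"
proof -
  interpret gm mult one \<Delta> \<epsilon> S using assms by unfold_locales
  show ?thesis by (rule main)
qed

end
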